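(* For every finite alphabet $\Sigma$ and every family of boring extensions $\mathcal E$ over $\Sigma$, the quintuple $(\Sigma^{<\omega},\sqsubseteq,\Sigma,\mathcal S,\mathcal M_{\mathcal E})$ is an $(\mathcal S,\mathcal M)$-tree.
   Context: A tree is a partially ordered set $(T,\preceq)$ such that for every $a\in T$ the set $\{b\in T:b\prec a\}$ is finite and linearly ordered by $\preceq$. The level of $a$ is $\ell(a)=|\{b\in T:b\prec a\}|$; $T(n)=\{a\in T:\ell(a)=n\}$, and $T(\le n)$, $T(<n)$ are defined analogously. A node $b$ is an immediate successor of $a$ if $a\prec b$ and there is no $c$ with $a\prec c\prec b$. An $\mathcal S$-tree is a quadruple $(T,\preceq,\Sigma,\mathcal S)$ where $(T,\preceq)$ is a countable tree in which every node has finitely many immediate successors and $T(0)$ is finite, $\Sigma$ is a set, and $\mathcal S\colon T\times T^{<\omega}\times\Sigma\to T$ is a partial function such that: (S1) if $\mathcal S(a,\bar p,c)$ is defined then it is an immediate successor of $a$ and every entry of $\bar p$ has level at most $\ell(a)-1$; (S2) if $\mathcal S(a,\bar p,c)=\mathcal S(b,\bar q,d)$ then $a=b$, $\bar p=\bar q$ and $c=d$; (S3) for every $a\in T$ and every immediate successor $b$ of $a$ there are $\bar p\in T^{<\omega}$ and $c\in\Sigma$ with $b=\mathcal S(a,\bar p,c)$. For $S\subseteq T$, a map $f\colon S\to T$ is level-preserving if $\ell(a)=\ell(b)$ implies $\ell(f(a))=\ell(f(b))$; then $\tilde f(n)$ denotes $\ell(f(a))$ for any $a\in S$ with $\ell(a)=n$.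 An injection $F\colon T\to T$ is shape-preserving if (i) it is level-preserving; (ii) whenever $\mathcal S(a,\bar p,c)$ is defined, $\mathcal S(F(a),F(\bar p),c)$ is defined and $\mathcal S(F(a),F(\bar p),c)\preceq F(\mathcal S(a,\bar p,c))$, where $F(\bar p)$ is the tuple of images of the entries of $\bar p$; (iii) for every $a\in T(0)$ and $b\in T$ with $a\preceq b$ we have $a\preceq F(b)$. A shape-preserving $F$ skips level $m$ if $m\notin\tilde F[\omega]$, and skips only level $m$ if $\tilde F[\omega]=\omega\setminus\{m\}$. An $(\mathcal S,\mathcal M)$-tree is a quintuple $(T,\preceq,\Sigma,\mathcal S,\mathcal M)$ where $(T,\preceq,\Sigma,\mathcal S)$ is an $\mathcal S$-tree and $\mathcal M$ is a set of shape-preserving functions $T\to T$ such that: (M1) $\mathrm{Id}_T\in\mathcal M$, $\mathcal M$ is closed under composition, and whenever $(F_i)_{i\in\omega}$ is a sequence in $\mathcal M$ with $F_i\restriction T(\le i)=F_{i+1}\restriction T(\le i)$ for all $i$, there is $F_\infty\in\mathcal M$ with $F_\infty\restriction T(\le i)=F_i\restriction T(\le i)$ for all $i$; (M2) for every $n\in\omega$ and every $F\in\mathcal M$ with $\tilde F(n)>0$ which skips level $\tilde F(n)-1$, there are $F_1,F_2\in\mathcal M$ such that $F_2$ skips only level $\tilde F(n)-1$ and $(F_2\circ F_1)\restriction T(\le n)=F\restriction T(\le n)$; (M3) for all $n<m$ in $\omega$ there is $F^n_m\in\mathcal M$ skipping only level $m$ such that $F^n_m(b)=\mathcal S(b,\bar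 p,c)$ whenever $a\in T(n)$, $b\in T(m)$, $\bar p\in T^{<\omega}$, $c\in\Sigma$, $\mathcal S(a,\bar p,c)$ is defined and $\mathcal S(a,\bar p,c)\preceq b$. Words: $\Sigma^{<\omega}$ is the set of finite words over the finite alphabet $\Sigma$, ordered by $\sqsubseteq$ (initial segment); the level of a word is its length. For a word $w$ and $i<|w|$, $w_i$ is its letter at index $i$ (indices start at $0$), $w|_\ell$ is its initial segment of length $\ell\le|w|$, and $u^\frown v$ denotes concatenation. The successor operation $\mathcal S$ on $\Sigma^{<\omega}$ is defined only for empty parameter tuples, by $\mathcal S(a,(),c)=a^\frown c$. A family of boring extensions over $\Sigma$ is a sequence $\mathcal E=(\mathcal E_n)_{n\in\omega}$ with $\mathcal E_n$ a set of functions $\Sigma^n\to\Sigma$ such that: (B1) for all $m<n$, the function $e^n_m\colon\Sigma^n\to\Sigma$, $e^n_m(a)=a_m$, lies in $\mathcal E_n$; (B2) for all $m\le n$, $e_1\in\mathcal E_m$, $e_2\in\mathcal E_n$ there is $e_3\in\mathcal E_{n+1}$ with $e_3(a^\frown e_1(a)^\frown b)=e_2(a^\frown b)$ for all $a\in\Sigma^m$, $b\in\Sigma^{n-m}$. For $X\subseteq\Sigma^{<\omega}$, the set of interesting levels $I_{\mathcal E}(X)$ is the set of all $\ell\in\omega$ for which there is no $e\in\mathcal E_\ell$ such that $(a|_\ell)^\frown e(a|_\ell)\sqsubseteq a$ for every $a\in X$ with $|a|\ge\ell$. $\mathcal M_{\mathcal E}$ is the set of all shape-preserving $F\colon\Sigma^{<\omega}\to\Sigma^{<\omega}$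 with $I_{\mathcal E}(F[\Sigma^{<\omega}])=\tilde F[\omega]$. *)

theory Defs
  imports Main "HOL-Library.Countable_Set" "HOL-Library.Sublist"
begin

definition strict :: "('a \<Rightarrow> 'a \<Rightarrow> bool) \<Rightarrow> 'a \<Rightarrow> 'a \<Rightarrow> bool" where
  "strict le b a \<longleftrightarrow> le b a \<and> b \<noteq> a"

definition is_tree :: "'a set \<Rightarrow> ('a \<Rightarrow> 'a \<Rightarrow> bool) \<Rightarrow> bool" where
  "is_tree T le \<longleftrightarrow>
     (\<forall>a\<in>T. le a a) \<and>
     (\<forall>a\<in>T. \<forall>b\<in>T. le a b \<and> le b a \<longrightarrow> a = b) \<and>
     (\<forall>a\<in>T. \<forall>b\<in>T. \<forall>c\<in>T. le a b \<and> le b c \<longrightarrow> le a c) \<and>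
     (\<forall>a\<in>T. finite {b\<in>T. strict le b a} \<and>
        (\<forall>b\<in>{b\<in>T. strict le b a}. \<forall>c\<in>{b\<in>T. strict le b a}. le b c \<or> le c b))"

definition level :: "'a set \<Rightarrow> ('a \<Rightarrow> 'a \<Rightarrow> bool) \<Rightarrow> 'a \<Rightarrow> nat" where
  "level T le a = card {b\<in>T. strict le b a}"

definition imm_succ :: "'a set \<Rightarrow> ('a \<Rightarrow> 'a \<Rightarrow> bool) \<Rightarrow> 'a \<Rightarrow> 'a \<Rightarrow> bool" where
  "imm_succ T le a b \<longleftrightarrow> a \<in> T \<and> b \<in> T \<and> strict le a b \<and>
     \<not> (\<exists>c\<in>T. strict le a c \<and> strict le c b)"

text \<open>The partial successor operation \<open>\<S> : T \<times> T^{<\<omega>} \<times> \<Sigma> \<rightharpoonup> T\<close> is rendered as a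
  function into an option type; tuples in \<open>T^{<\<omega>}\<close> are lists.\<close>

definition is_S_tree ::
  "'a set \<Rightarrow> ('a \<Rightarrow> 'a \<Rightarrow> bool) \<Rightarrow> 'c set \<Rightarrow> ('a \<Rightarrow> 'a list \<Rightarrow> 'c \<Rightarrow> 'a option) \<Rightarrow> bool" where
  "is_S_tree T le \<Sigma> S \<longleftrightarrow>
     is_tree T le \<and> countable T \<and>
     (\<forall>a\<in>T. finite {b. imm_succ T le a b}) \<and>
     finite {a\<in>T. level T le a = 0} \<and>
     \<comment> \<open>S is a partial function T \<times> T^{<\<omega>} \<times> \<Sigma> \<rightarrow> T\<close>
     (\<forall>a p c b. S a p c = Some b \<longrightarrow> a \<in> T \<and> set p \<subseteq> T \<and> c \<in> \<Sigma> \<and> b \<in> T) \<and>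
     \<comment> \<open>(S1)\<close>
     (\<forall>a p c b. S a p c = Some b \<longrightarrow>
        imm_succ T le a b \<and> (\<forall>x\<in>set p. level T le x + 1 \<le> level T le a)) \<and>
     \<comment> \<open>(S2)\<close>
     (\<forall>a p c b q d. S a p c \<noteq> None \<and> S a p c = S b q d \<longrightarrow> a = b \<and> p = q \<and> c = d) \<and>
     \<comment> \<open>(S3)\<close>
     (\<forall>a\<in>T. \<forall>b. imm_succ T le a b \<longrightarrow> (\<exists>p c. S a p c = Some b))"

definition level_preserving :: "'a set \<Rightarrow> ('a \<Rightarrow> 'a \<Rightarrow> bool) \<Rightarrow> 'a set \<Rightarrow> ('a \<Rightarrow> 'a) \<Rightarrow> bool" where
  "level_preserving T le A f \<longleftrightarrow>
     (\<forall>a\<in>A. \<forall>b\<in>A. level T le a = level T le b \<longrightarrow> level T le (f a) = level T le (f b))"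

definition tilde :: "'a set \<Rightarrow> ('a \<Rightarrow> 'a \<Rightarrow> bool) \<Rightarrow> ('a \<Rightarrow> 'a) \<Rightarrow> nat \<Rightarrow> nat" where
  "tilde T le F n = level T le (F (SOME a. a \<in> T \<and> level T le a = n))"

definition tilde_range :: "'a set \<Rightarrow> ('a \<Rightarrow> 'a \<Rightarrow> bool) \<Rightarrow> ('a \<Rightarrow> 'a) \<Rightarrow> nat set" where
  "tilde_range T le F = {level T le (F a) | a. a \<in> T}"

definition shape_preserving ::
  "'a set \<Rightarrow> ('a \<Rightarrow> 'a \<Rightarrow> bool) \<Rightarrow> ('a \<Rightarrow> 'a list \<Rightarrow> 'c \<Rightarrow> 'a option) \<Rightarrow> ('a \<Rightarrow> 'a) \<Rightarrow> bool" where
  "shape_preserving T le S F \<longleftrightarrow>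
     F ` T \<subseteq> T \<and> inj_on F T \<and>
     level_preserving T le T F \<and>
     (\<forall>a p c b. S a p c = Some b \<longrightarrow>
        (\<exists>b'. S (F a) (map F p) c = Some b' \<and> le b' (F b))) \<and>
     (\<forall>a\<in>T. level T le a = 0 \<longrightarrow> (\<forall>b\<in>T. le a b \<longrightarrow> le a (F b)))"

definition skips :: "'a set \<Rightarrow> ('a \<Rightarrow> 'a \<Rightarrow> bool) \<Rightarrow> ('a \<Rightarrow> 'a) \<Rightarrow> nat \<Rightarrow> bool" where
  "skips T le F m \<longleftrightarrow> m \<notin> tilde_range T le F"

definition skips_only :: "'a set \<Rightarrow> ('a \<Rightarrow> 'a \<Rightarrow> bool) \<Rightarrow> ('a \<Rightarrow> 'a) \<Rightarrow> nat \<Rightarrow> bool" where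
  "skips_only T le F m \<longleftrightarrow> tilde_range T le F = UNIV - {m}"

text \<open>Maps in \<open>\<M>\<close> are functions \<open>T \<rightarrow> T\<close>; HOL functions are total, so all equalities
  between maps are taken on the carrier T.\<close>

definition is_SM_tree ::
  "'a set \<Rightarrow> ('a \<Rightarrow> 'a \<Rightarrow> bool) \<Rightarrow> 'c set \<Rightarrow> ('a \<Rightarrow> 'a list \<Rightarrow> 'c \<Rightarrow> 'a option)
     \<Rightarrow> ('a \<Rightarrow> 'a) set \<Rightarrow> bool" where
  "is_SM_tree T le \<Sigma> S M \<longleftrightarrow>
     is_S_tree T le \<Sigma> S \<and>
     (\<forall>F\<in>M. shape_preserving T le S F) \<and>
     \<comment> \<open>(M1)\<close>
     (\<exists>G\<in>M. \<forall>a\<in>T. G a = a) \<and>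
     (\<forall>F\<in>M. \<forall>G\<in>M. \<exists>H\<in>M. \<forall>a\<in>T. H a = F (G a)) \<and>
     (\<forall>Fs :: nat \<Rightarrow> ('a \<Rightarrow> 'a).
        (\<forall>i. Fs i \<in> M) \<and>
        (\<forall>i. \<forall>a\<in>T. level T le a \<le> i \<longrightarrow> Fs i a = Fs (Suc i) a) \<longrightarrow>
        (\<exists>G\<in>M. \<forall>i. \<forall>a\<in>T. level T le a \<le> i \<longrightarrow> G a = Fs i a)) \<and>
     \<comment> \<open>(M2)\<close>
     (\<forall>n. \<forall>F\<in>M. tilde T le F n > 0 \<and> skips T le F (tilde T le F n - 1) \<longrightarrow>
        (\<exists>F1\<in>M. \<exists>F2\<in>M. skips_only T le F2 (tilde T le F n - 1) \<and>
           (\<forall>a\<in>T. level T le a \<le> n \<longrightarrow> F2 (F1 a) = F a))) \<and>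
     \<comment> \<open>(M3)\<close>
     (\<forall>n m. n < m \<longrightarrow>
        (\<exists>F\<in>M. skips_only T le F m \<and>
           (\<forall>a b p c x. a \<in> T \<and> level T le a = n \<and> b \<in> T \<and> level T le b = m \<and>
              S a p c = Some x \<and> le x b \<longrightarrow> S b p c = Some (F b))))"

definition words :: "'c set \<Rightarrow> 'c list set" where
  "words \<Sigma> = {w. set w \<subseteq> \<Sigma>}"

definition word_S :: "'c set \<Rightarrow> 'c list \<Rightarrow> 'c list list \<Rightarrow> 'c \<Rightarrow> 'c list option" where
  "word_S \<Sigma> a p c = (if set a \<subseteq> \<Sigma> \<and> p = [] \<and> c \<in> \<Sigma> then Some (a @ [c]) else None)"

text \<open>Families of boring extensions: \<open>E n\<close> is a set of functions \<open>\<Sigma>^n \<rightarrow> \<Sigma>\<close>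
  (represented by functions on lists, only their values on \<open>\<Sigma>^n\<close> matter).\<close>

definition boring_family :: "'c set \<Rightarrow> (nat \<Rightarrow> ('c list \<Rightarrow> 'c) set) \<Rightarrow> bool" where
  "boring_family \<Sigma> E \<longleftrightarrow>
     (\<forall>n. \<forall>e\<in>E n. \<forall>a. set a \<subseteq> \<Sigma> \<and> length a = n \<longrightarrow> e a \<in> \<Sigma>) \<and>
     \<comment> \<open>(B1)\<close>
     (\<forall>n m. m < n \<longrightarrow> (\<exists>e\<in>E n. \<forall>a. set a \<subseteq> \<Sigma> \<and> length a = n \<longrightarrow> e a = a ! m)) \<and>
     \<comment> \<open>(B2)\<close>
     (\<forall>m n. m \<le> n \<longrightarrow> (\<forall>e1\<in>E m. \<forall>e2\<in>E n. \<exists>e3\<in>E (Suc n).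
        \<forall>a b. set a \<subseteq> \<Sigma> \<and> length a = m \<and> set b \<subseteq> \<Sigma> \<and> length b = n - m \<longrightarrow>
          e3 (a @ [e1 a] @ b) = e2 (a @ b)))"

definition interesting_levels :: "(nat \<Rightarrow> ('c list \<Rightarrow> 'c) set) \<Rightarrow> 'c list set \<Rightarrow> nat set" where
  "interesting_levels E X =
     {l. \<not> (\<exists>e\<in>E l. \<forall>a\<in>X. length a \<ge> l \<longrightarrow> prefix (take l a @ [e (take l a)]) a)}"

definition M_E :: "'c set \<Rightarrow> (nat \<Rightarrow> ('c list \<Rightarrow> 'c) set) \<Rightarrow> ('c list \<Rightarrow> 'c list) set" where
  "M_E \<Sigma> E = {F. shape_preserving (words \<Sigma>) prefix (word_S \<Sigma>) F \<and>
       interesting_levels E (F ` words \<Sigma>) = tilde_range (words \<Sigma>) prefix F}"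

end

theory Submission
  imports Defs
begin


lemma words_iff: "w \<in> words \<Sigma> \<longleftrightarrow> set w \<subseteq> \<Sigma>" by (simp add: words_def)

lemma strict_pre: "strict prefix b a \<longleftrightarrow> prefix b a \<and> b \<noteq> a" by (simp add: strict_def)

lemma spre_set: "a \<in> words \<Sigma> \<Longrightarrow> {b\<in>words \<Sigma>. strict prefix b a} = (\<lambda>i. take i a) ` {..<length a}"
proof (rule set_eqI, rule iffI)
  fix b assume a: "a \<in> words \<Sigma>" and "b \<in> {b\<in>words \<Sigma>. strict prefix b a}"
  then have "prefix b a" "b \<noteq> a" by (auto simp: strict_pre)
  then have "b = take (length b) a" "length b < length a"
    by (metis append_eq_conv_conj prefixE) (meson \<open>prefix b a\<close> \<open>b \<noteq> a\<close> prefix_length_less strict_prefix_def)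
  then show "b \<in> (\<lambda>i. take i a) ` {..<length a}" by auto
next
  fix b assume a: "a \<in> words \<Sigma>" and "b \<in> (\<lambda>i. take i a) ` {..<length a}"
  then obtain i where "i < length a" "b = take i a" by auto
  then show "b \<in> {b\<in>words \<Sigma>. strict prefix b a}" using a
    by (auto simp: words_iff strict_pre take_is_prefix dest: in_set_takeD)
qed

lemma level_words[simp]: "a \<in> words \<Sigma> \<Longrightarrow> level (words \<Sigma>) prefix a = length a"
proof -
  assume a: "a \<in> words \<Sigma>"
  have "inj_on (\<lambda>i. take i a) {..<length a}"
    by (rule inj_onI) (metis lessThan_iff length_take min.absorb4 nat_less_le)
  then show ?thesis unfolding level_def spre_set[OF a] by (simp add: card_image)
qed

definition sp :: "'c set \<Rightarrow> ('c list \<Rightarrow> 'c list) \<Rightarrow> bool" where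
"sp \<Sigma> F \<longleftrightarrow> (\<forall>a\<in>words \<Sigma>. F a \<in> words \<Sigma>) \<and> inj_on F (words \<Sigma>) \<and>
   (\<forall>a\<in>words \<Sigma>. \<forall>b\<in>words \<Sigma>. length a = length b \<longrightarrow> length (F a) = length (F b)) \<and>
   (\<forall>a\<in>words \<Sigma>. \<forall>c\<in>\<Sigma>. prefix (F a @ [c]) (F (a @ [c])))"

definition gapok :: "'c set \<Rightarrow> (nat \<Rightarrow> ('c list \<Rightarrow> 'c) set) \<Rightarrow> ('c list \<Rightarrow> 'c list) \<Rightarrow> bool" where
"gapok \<Sigma> E F \<longleftrightarrow> (\<forall>l. l \<notin> {length (F a) | a. a \<in> words \<Sigma>} \<longrightarrow>
   (\<exists>e\<in>E l. \<forall>a\<in>words \<Sigma>. l < length (F a) \<longrightarrow> F a ! l = e (take l (F a))))"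

lemma shape_iff: "shape_preserving (words \<Sigma>) prefix (word_S \<Sigma>) F \<longleftrightarrow> sp \<Sigma> F"
proof
  assume h: "shape_preserving (words \<Sigma>) prefix (word_S \<Sigma>) F"
  then have im: "\<forall>a\<in>words \<Sigma>. F a \<in> words \<Sigma>" and inj: "inj_on F (words \<Sigma>)"
    unfolding shape_preserving_def by blast+
  moreover have "\<forall>a\<in>words \<Sigma>. \<forall>b\<in>words \<Sigma>. length a = length b \<longrightarrow> length (F a) = length (F b)"
  proof (intro ballI impI)
    fix a b assume ab: "a \<in> words \<Sigma>" "b \<in> words \<Sigma>" "length a = length b"
    then have "level (words \<Sigma>) prefix a = level (words \<Sigma>) prefix b" by simp
    moreover have "level_preserving (words \<Sigma>) prefix (words \<Sigma>) F" using h unfolding shape_preserving_def by blast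
    ultimately have "level (words \<Sigma>) prefix (F a) = level (words \<Sigma>) prefix (F b)"
      using ab unfolding level_preserving_def by blast
    then show "length (F a) = length (F b)" using ab im by simp
  qed
  moreover have "\<forall>a\<in>words \<Sigma>. \<forall>c\<in>\<Sigma>. prefix (F a @ [c]) (F (a @ [c]))"
  proof (intro ballI)
    fix a c assume a: "a \<in> words \<Sigma>" and c: "c \<in> \<Sigma>"
    have "word_S \<Sigma> a [] c = Some (a @ [c])" using a c by (simp add: word_S_def words_iff)
    moreover from h have "\<forall>a p c b. word_S \<Sigma> a p c = Some b \<longrightarrow> (\<exists>b'. word_S \<Sigma> (F a) (map F p) c = Some b' \<and> prefix b' (F b))"
      unfolding shape_preserving_def by blast
    ultimately have "\<exists>b'. word_S \<Sigma> (F a) (map F []) c = Some b' \<and> prefix b' (F (a @ [c]))" by blast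
    then obtain b' where "word_S \<Sigma> (F a) [] c = Some b'" "prefix b' (F (a @ [c]))" by auto
    then show "prefix (F a @ [c]) (F (a @ [c]))" by (simp add: word_S_def split: if_splits)
  qed
  ultimately show "sp \<Sigma> F" unfolding sp_def by blast
next
  assume h: "sp \<Sigma> F"
  then have im: "\<forall>a\<in>words \<Sigma>. F a \<in> words \<Sigma>" unfolding sp_def by blast
  show "shape_preserving (words \<Sigma>) prefix (word_S \<Sigma>) F"
    unfolding shape_preserving_def level_preserving_def
  proof (intro conjI)
    show "F ` words \<Sigma> \<subseteq> words \<Sigma>" using im by auto
    show "inj_on F (words \<Sigma>)" using h unfolding sp_def by blast
    show "\<forall>a\<in>words \<Sigma>. \<forall>b\<in>words \<Sigma>. level (words \<Sigma>) prefix a = level (words \<Sigma>) prefix b \<longrightarrow>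
        level (words \<Sigma>) prefix (F a) = level (words \<Sigma>) prefix (F b)"
    proof (intro ballI impI)
      fix a b assume ab: "a \<in> words \<Sigma>" "b \<in> words \<Sigma>" "level (words \<Sigma>) prefix a = level (words \<Sigma>) prefix b"
      then have "length a = length b" by simp
      moreover have "\<forall>a\<in>words \<Sigma>. \<forall>b\<in>words \<Sigma>. length a = length b \<longrightarrow> length (F a) = length (F b)"
        using h unfolding sp_def by blast
      ultimately have "length (F a) = length (F b)" using ab(1,2) by blast
      then show "level (words \<Sigma>) prefix (F a) = level (words \<Sigma>) prefix (F b)" using ab im by simp
    qed
    show "\<forall>a p c b. word_S \<Sigma> a p c = Some b \<longrightarrow> (\<exists>b'. word_S \<Sigma> (F a) (map F p) c = Some b' \<and> prefix b' (F b))"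
    proof (intro allI impI)
      fix a p c b assume "word_S \<Sigma> a p c = Some b"
      then have a: "a \<in> words \<Sigma>" "p = []" "c \<in> \<Sigma>" "b = a @ [c]" by (auto simp: word_S_def words_iff split: if_splits)
      then have "F a \<in> words \<Sigma>" using im by auto
      then show "\<exists>b'. word_S \<Sigma> (F a) (map F p) c = Some b' \<and> prefix b' (F b)"
      proof -
        have "prefix (F a @ [c]) (F (a @ [c]))" using a h unfolding sp_def by blast
        then show ?thesis using a \<open>F a \<in> words \<Sigma>\<close> by (simp add: word_S_def words_iff)
      qed
    qed
    show "\<forall>a\<in>words \<Sigma>. level (words \<Sigma>) prefix a = 0 \<longrightarrow> (\<forall>b\<in>words \<Sigma>. prefix a b \<longrightarrow> prefix a (F b))"
    proof (intro ballI impI allI)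
      fix a b assume "a \<in> words \<Sigma>" "level (words \<Sigma>) prefix a = 0"
      then have "a = []" by simp
      then show "prefix a (F b)" by simp
    qed
  qed
qed

lemma prefix_nth_iff: "l < length x \<Longrightarrow> prefix (take l x @ [y]) x \<longleftrightarrow> x ! l = y"
proof -
  assume l: "l < length x"
  have x: "x = take l x @ [x ! l] @ drop (Suc l) x" using l
    by (metis Cons_nth_drop_Suc append_Cons append_self_conv2 append_take_drop_id)
  show ?thesis
  proof
    assume "prefix (take l x @ [y]) x"
    then have "prefix (take l x @ [y]) (take l x @ [x ! l] @ drop (Suc l) x)" using x by metis
    then show "x ! l = y" by (simp only: same_prefix_prefix) simp
  next
    assume "x ! l = y" then show "prefix (take l x @ [y]) x" using x
      by (metis append.assoc prefixI)
  qed
qed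

lemma interesting_iff:
  assumes "sp \<Sigma> F"
  shows "interesting_levels E (F ` words \<Sigma>) = tilde_range (words \<Sigma>) prefix F \<longleftrightarrow> gapok \<Sigma> E F"
proof -
  have im: "\<forall>a\<in>words \<Sigma>. F a \<in> words \<Sigma>" using assms unfolding sp_def by blast
  have tr: "tilde_range (words \<Sigma>) prefix F = {length (F a) | a. a \<in> words \<Sigma>}"
  proof -
    have eq: "\<forall>a\<in>words \<Sigma>. level (words \<Sigma>) prefix (F a) = length (F a)" using im by simp
    show ?thesis unfolding tilde_range_def
    proof (rule set_eqI, rule iffI)
      fix l assume "l \<in> {level (words \<Sigma>) prefix (F a) |a. a \<in> words \<Sigma>}"
      then obtain a where "a \<in> words \<Sigma>" "l = level (words \<Sigma>) prefix (F a)" by blast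
      then show "l \<in> {length (F a) |a. a \<in> words \<Sigma>}" using eq by auto
    next
      fix l assume "l \<in> {length (F a) |a. a \<in> words \<Sigma>}"
      then obtain a where a: "a \<in> words \<Sigma>" "l = length (F a)" by blast
      then have "l = level (words \<Sigma>) prefix (F a)" using eq by simp
      then show "l \<in> {level (words \<Sigma>) prefix (F a) |a. a \<in> words \<Sigma>}" using a by blast
    qed
  qed
  have sub: "{length (F a) | a. a \<in> words \<Sigma>} \<subseteq> interesting_levels E (F ` words \<Sigma>)"
  proof
    fix l assume "l \<in> {length (F a) | a. a \<in> words \<Sigma>}"
    then obtain a where a: "a \<in> words \<Sigma>" "l = length (F a)" by auto
    show "l \<in> interesting_levels E (F ` words \<Sigma>)" unfolding interesting_levels_def
    proof (clarify)
      fix e assume "\<forall>x\<in>F ` words \<Sigma>. l \<le> length x \<longrightarrow> prefix (take l x @ [e (take l x)]) x"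
      then have "prefix (take l (F a) @ [e (take l (F a))]) (F a)" using a by auto
      then have "prefix (F a @ [e (F a)]) (F a)" using a by simp
      then have "length (F a @ [e (F a)]) \<le> length (F a)" by (rule prefix_length_le)
      then show False by simp
    qed
  qed
  have "interesting_levels E (F ` words \<Sigma>) \<subseteq> {length (F a) | a. a \<in> words \<Sigma>} \<longleftrightarrow> gapok \<Sigma> E F"
  proof
    assume h: "interesting_levels E (F ` words \<Sigma>) \<subseteq> {length (F a) | a. a \<in> words \<Sigma>}"
    show "gapok \<Sigma> E F" unfolding gapok_def
    proof (intro allI impI)
      fix l assume l: "l \<notin> {length (F a) | a. a \<in> words \<Sigma>}"
      then have "l \<notin> interesting_levels E (F ` words \<Sigma>)" using h by auto
      then obtain e where e: "e \<in> E l" "\<forall>x\<in>F ` words \<Sigma>. l \<le> length x \<longrightarrow> prefix (take l x @ [e (take l x)]) x"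
        unfolding interesting_levels_def by auto
      show "\<exists>e\<in>E l. \<forall>a\<in>words \<Sigma>. l < length (F a) \<longrightarrow> F a ! l = e (take l (F a))"
      proof (intro bexI[OF _ e(1)] ballI impI)
        fix a assume a: "a \<in> words \<Sigma>" "l < length (F a)"
        then have "prefix (take l (F a) @ [e (take l (F a))]) (F a)" using e(2) by auto
        then show "F a ! l = e (take l (F a))" using prefix_nth_iff[OF a(2)] by blast
      qed
    qed
  next
    assume h: "gapok \<Sigma> E F"
    show "interesting_levels E (F ` words \<Sigma>) \<subseteq> {length (F a) | a. a \<in> words \<Sigma>}"
    proof
      fix l assume l: "l \<in> interesting_levels E (F ` words \<Sigma>)"
      show "l \<in> {length (F a) | a. a \<in> words \<Sigma>}"
      proof (rule ccontr)
        assume nl: "l \<notin> {length (F a) | a. a \<in> words \<Sigma>}"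
        then obtain e where e: "e \<in> E l" "\<forall>a\<in>words \<Sigma>. l < length (F a) \<longrightarrow> F a ! l = e (take l (F a))"
          using h unfolding gapok_def by auto
        have "\<forall>x\<in>F ` words \<Sigma>. l \<le> length x \<longrightarrow> prefix (take l x @ [e (take l x)]) x"
        proof clarify
          fix a assume a: "a \<in> words \<Sigma>" "l \<le> length (F a)"
          have "l \<noteq> length (F a)" using nl a(1) by blast
          then have "l < length (F a)" using a(2) by simp
          then show "prefix (take l (F a) @ [e (take l (F a))]) (F a)" using e(2) a(1) prefix_nth_iff[OF \<open>l < length (F a)\<close>] by simp
        qed
        then show False using l e unfolding interesting_levels_def by auto
      qed
    qed
  qed
  then show ?thesis using sub tr by blast
qed

lemma ME_iff: "F \<in> M_E \<Sigma> E \<longleftrightarrow> sp \<Sigma> F \<and> gapok \<Sigma> E F"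
  unfolding M_E_def using shape_iff interesting_iff by blast



lemma words_take[intro]: "a \<in> words \<Sigma> \<Longrightarrow> take i a \<in> words \<Sigma>"
  by (meson order_trans set_take_subset words_iff)
lemma words_drop[intro]: "a \<in> words \<Sigma> \<Longrightarrow> drop i a \<in> words \<Sigma>"
  by (meson order_trans set_drop_subset words_iff)
lemma words_append[intro]: "a \<in> words \<Sigma> \<Longrightarrow> b \<in> words \<Sigma> \<Longrightarrow> a @ b \<in> words \<Sigma>"
  by (simp add: words_iff)
lemma words_snoc[intro]: "a \<in> words \<Sigma> \<Longrightarrow> c \<in> \<Sigma> \<Longrightarrow> a @ [c] \<in> words \<Sigma>"
  by (simp add: words_iff)
lemma words_nth[intro]: "a \<in> words \<Sigma> \<Longrightarrow> i < length a \<Longrightarrow> a ! i \<in> \<Sigma>"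
  by (meson nth_mem subsetD words_iff)
lemma words_Nil[intro]: "[] \<in> words \<Sigma>" by (simp add: words_iff)
lemma words_prefix: "a \<in> words \<Sigma> \<Longrightarrow> prefix b a \<Longrightarrow> b \<in> words \<Sigma>"
  by (meson set_mono_prefix order_trans words_iff)
lemma words_replicate[intro]: "x \<in> \<Sigma> \<Longrightarrow> replicate n x \<in> words \<Sigma>"
  by (auto simp: words_iff)

context fixes \<Sigma> :: "'c set" and F :: "'c list \<Rightarrow> 'c list" assumes spF: "sp \<Sigma> F"
begin

lemma sp_im: "a \<in> words \<Sigma> \<Longrightarrow> F a \<in> words \<Sigma>" using spF unfolding sp_def by blast
lemma sp_inj: "inj_on F (words \<Sigma>)" using spF unfolding sp_def by blast
lemma sp_len: "a \<in> words \<Sigma> \<Longrightarrow> b \<in> words \<Sigma> \<Longrightarrow> length a = length b \<Longrightarrow> length (F a) = length (F b)"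
  using spF unfolding sp_def by blast
lemma sp_pre: "a \<in> words \<Sigma> \<Longrightarrow> c \<in> \<Sigma> \<Longrightarrow> prefix (F a @ [c]) (F (a @ [c]))"
  using spF unfolding sp_def by blast

lemma sp_mono_aux: "b @ d \<in> words \<Sigma> \<Longrightarrow> prefix (F b) (F (b @ d))"
proof (induction d rule: rev_induct)
  case Nil then show ?case by simp
next
  case (snoc c d)
  have w: "b @ d \<in> words \<Sigma>" "c \<in> \<Sigma>" using snoc.prems by (auto simp: words_iff)
  have "prefix (F b) (F (b @ d))" using snoc.IH w by blast
  also have "prefix (F (b @ d)) (F (b @ d) @ [c])" by simp
  also have "prefix (F (b @ d) @ [c]) (F ((b @ d) @ [c]))" using sp_pre w by blast
  finally show ?case by simp
qed

lemma sp_mono: "a \<in> words \<Sigma> \<Longrightarrow> prefix b a \<Longrightarrow> prefix (F b) (F a)"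
  using sp_mono_aux by (metis prefix_def)

lemma sp_len_ge: "a \<in> words \<Sigma> \<Longrightarrow> length a \<le> length (F a)"
proof (induction a rule: rev_induct)
  case Nil then show ?case by simp
next
  case (snoc c a)
  have w: "a \<in> words \<Sigma>" "c \<in> \<Sigma>" using snoc.prems by (auto simp: words_iff)
  have "prefix (F a @ [c]) (F (a @ [c]))" using sp_pre w by blast
  then have "length (F a) + 1 \<le> length (F (a @ [c]))" using prefix_length_le by fastforce
  then show ?case using snoc.IH w by simp
qed

lemma sp_strict: "u \<in> words \<Sigma> \<Longrightarrow> v \<in> words \<Sigma> \<Longrightarrow> length u < length v \<Longrightarrow> length (F u) < length (F v)"
proof -
  assume u: "u \<in> words \<Sigma>" and v: "v \<in> words \<Sigma>" and l: "length u < length v"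
  let ?v' = "take (length u) v"
  have v'': "take (Suc (length u)) v = ?v' @ [v ! length u]" using l by (simp add: take_Suc_conv_app_nth)
  have "length (F ?v') = length (F u)" using sp_len[of ?v' u] u v l by auto
  moreover have "prefix (F ?v' @ [v ! length u]) (F (take (Suc (length u)) v))"
    using sp_pre[of ?v' "v ! length u"] v l v'' by auto
  moreover have "prefix (F (take (Suc (length u)) v)) (F v)" using sp_mono v take_is_prefix by blast
  ultimately have "length (F ?v' @ [v ! length u]) \<le> length (F (take (Suc (length u)) v))"
    "length (F (take (Suc (length u)) v)) \<le> length (F v)" "length (F ?v') = length (F u)"
    by (auto dest: prefix_length_le)
  then show ?thesis by simp
qed

lemma sp_nth: "a \<in> words \<Sigma> \<Longrightarrow> i < length a \<Longrightarrow> F a ! length (F (take i a)) = a ! i"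
proof -
  assume a: "a \<in> words \<Sigma>" and i: "i < length a"
  have v'': "take (Suc i) a = take i a @ [a ! i]" using i by (simp add: take_Suc_conv_app_nth)
  have "prefix (F (take i a) @ [a ! i]) (F (take (Suc i) a))"
    using sp_pre[of "take i a" "a ! i"] a i v'' by auto
  moreover have "prefix (F (take (Suc i) a)) (F a)" using sp_mono a take_is_prefix by blast
  ultimately have "prefix (F (take i a) @ [a ! i]) (F a)" by (rule prefix_order.order_trans)
  then obtain zs where "F a = (F (take i a) @ [a ! i]) @ zs" by (rule prefixE)
  then show ?thesis by (simp add: nth_append)
qed

lemma sp_tilde: "a \<in> words \<Sigma> \<Longrightarrow> tilde (words \<Sigma>) prefix F (length a) = length (F a)"
proof -
  assume a: "a \<in> words \<Sigma>"
  have "\<exists>b. b \<in> words \<Sigma> \<and> level (words \<Sigma>) prefix b = length a" using a by auto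
  then have "(SOME b. b \<in> words \<Sigma> \<and> level (words \<Sigma>) prefix b = length a) \<in> words \<Sigma> \<and>
      level (words \<Sigma>) prefix (SOME b. b \<in> words \<Sigma> \<and> level (words \<Sigma>) prefix b = length a) = length a"
    by (rule someI_ex)
  then have b: "(SOME b. b \<in> words \<Sigma> \<and> level (words \<Sigma>) prefix b = length a) \<in> words \<Sigma>"
    "length (SOME b. b \<in> words \<Sigma> \<and> level (words \<Sigma>) prefix b = length a) = length a" by auto
  then show ?thesis unfolding tilde_def using sp_im[OF b(1)] sp_len[OF b(1) a b(2)] by simp
qed

lemma sp_trange: "tilde_range (words \<Sigma>) prefix F = {length (F a) | a. a \<in> words \<Sigma>}"
proof (rule set_eqI, rule iffI)
  fix l assume "l \<in> tilde_range (words \<Sigma>) prefix F"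
  then obtain a where a: "a \<in> words \<Sigma>" "l = level (words \<Sigma>) prefix (F a)" unfolding tilde_range_def by blast
  then have "l = length (F a)" using sp_im by simp
  then show "l \<in> {length (F a) |a. a \<in> words \<Sigma>}" using a by blast
next
  fix l assume "l \<in> {length (F a) |a. a \<in> words \<Sigma>}"
  then obtain a where a: "a \<in> words \<Sigma>" "l = length (F a)" by blast
  then have "l = level (words \<Sigma>) prefix (F a)" using sp_im by simp
  then show "l \<in> tilde_range (words \<Sigma>) prefix F" using a unfolding tilde_range_def by blast
qed

end


lemma is_tree_words: "is_tree (words \<Sigma>) prefix"
  unfolding is_tree_def
proof (intro conjI ballI)
  fix a assume a: "a \<in> words \<Sigma>"
  show "finite {b \<in> words \<Sigma>. strict prefix b a}" unfolding spre_set[OF a] by simp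
  fix b c assume "b \<in> {b \<in> words \<Sigma>. strict prefix b a}" "c \<in> {b \<in> words \<Sigma>. strict prefix b a}"
  then have "prefix b a" "prefix c a" by (auto simp: strict_pre)
  then show "prefix b c \<or> prefix c b" by (rule prefix_same_cases)
qed (auto intro: prefix_order.order_trans)

lemma imm_succ_words: "imm_succ (words \<Sigma>) prefix a b \<Longrightarrow> \<exists>c\<in>\<Sigma>. b = a @ [c]"
proof -
  assume h: "imm_succ (words \<Sigma>) prefix a b"
  then have a: "a \<in> words \<Sigma>" "b \<in> words \<Sigma>" "prefix a b" "a \<noteq> b"
    and no: "\<not> (\<exists>c\<in>words \<Sigma>. strict prefix a c \<and> strict prefix c b)"
    by (auto simp: imm_succ_def strict_pre)
  have lt: "length a < length b" using a prefix_length_less strict_prefix_def by blast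
  have ab: "take (length a) b = a" using a(3) by (metis append_eq_conv_conj prefixE)
  have "length b = Suc (length a)"
  proof (rule ccontr)
    assume "length b \<noteq> Suc (length a)"
    then have lt2: "Suc (length a) < length b" using lt by simp
    let ?c = "take (Suc (length a)) b"
    have "?c \<in> words \<Sigma>" using a(2) by blast
    moreover have "prefix a ?c"
    proof -
      have "take (length a) ?c = a" using ab by (simp add: min_def)
      then show ?thesis by (metis take_is_prefix)
    qed
    moreover have "a \<noteq> ?c" using lt2 by (metis length_take min.absorb4 n_not_Suc_n)
    moreover have "prefix ?c b" by (rule take_is_prefix)
    moreover have "?c \<noteq> b" using lt2 by (metis length_take min.absorb4 nat_neq_iff)
    ultimately show False using no by (auto simp: strict_pre)
  qed
  then have "b = take (length a) b @ [b ! length a]"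
    by (metis lessI take_Suc_conv_app_nth take_all order_refl)
  then have "b = a @ [b ! length a]" using ab by simp
  moreover have "b ! length a \<in> \<Sigma>" using a(2) lt by blast
  ultimately show ?thesis by blast
qed

lemma imm_succ_snoc: "a \<in> words \<Sigma> \<Longrightarrow> c \<in> \<Sigma> \<Longrightarrow> imm_succ (words \<Sigma>) prefix a (a @ [c])"
proof -
  assume a: "a \<in> words \<Sigma>" and c: "c \<in> \<Sigma>"
  have "\<not> (\<exists>d\<in>words \<Sigma>. strict prefix a d \<and> strict prefix d (a @ [c]))"
  proof
    assume "\<exists>d\<in>words \<Sigma>. strict prefix a d \<and> strict prefix d (a @ [c])"
    then obtain d where "strict_prefix a d" "strict_prefix d (a @ [c])" by (auto simp: strict_pre strict_prefix_def)
    then have "length a < length d" "length d < length (a @ [c])" by (auto dest: prefix_length_less)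
    then show False by simp
  qed
  then show ?thesis using a c by (auto simp: imm_succ_def strict_pre)
qed

lemma S_tree_words:
  assumes fin: "finite \<Sigma>"
  shows "is_S_tree (words \<Sigma>) prefix \<Sigma> (word_S \<Sigma>)"
  unfolding is_S_tree_def
proof (intro conjI)
  show "is_tree (words \<Sigma>) prefix" by (rule is_tree_words)
  have "words \<Sigma> \<subseteq> lists \<Sigma>" by (auto simp: words_iff)
  moreover have "countable (lists \<Sigma>)" using fin by (simp add: countable_finite)
  ultimately show "countable (words \<Sigma>)" by (rule countable_subset)
  show "\<forall>a\<in>words \<Sigma>. finite {b. imm_succ (words \<Sigma>) prefix a b}"
  proof
    fix a assume a: "a \<in> words \<Sigma>"
    have "{b. imm_succ (words \<Sigma>) prefix a b} \<subseteq> (\<lambda>c. a @ [c]) ` \<Sigma>"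
      using imm_succ_words by blast
    then show "finite {b. imm_succ (words \<Sigma>) prefix a b}" using fin finite_subset by blast
  qed
  have "{a \<in> words \<Sigma>. level (words \<Sigma>) prefix a = 0} \<subseteq> {[]}" by auto
  then show "finite {a \<in> words \<Sigma>. level (words \<Sigma>) prefix a = 0}" using finite_subset by blast
  show "\<forall>a p c b. word_S \<Sigma> a p c = Some b \<longrightarrow> a \<in> words \<Sigma> \<and> set p \<subseteq> words \<Sigma> \<and> c \<in> \<Sigma> \<and> b \<in> words \<Sigma>"
    by (auto simp: word_S_def words_iff split: if_splits)
  show "\<forall>a p c b. word_S \<Sigma> a p c = Some b \<longrightarrow>
        imm_succ (words \<Sigma>) prefix a b \<and> (\<forall>x\<in>set p. level (words \<Sigma>) prefix x + 1 \<le> level (words \<Sigma>) prefix a)"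
  proof (intro allI impI)
    fix a p c b assume "word_S \<Sigma> a p c = Some b"
    then have "a \<in> words \<Sigma>" "p = []" "c \<in> \<Sigma>" "b = a @ [c]" by (auto simp: word_S_def words_iff split: if_splits)
    then show "imm_succ (words \<Sigma>) prefix a b \<and> (\<forall>x\<in>set p. level (words \<Sigma>) prefix x + 1 \<le> level (words \<Sigma>) prefix a)"
      using imm_succ_snoc by auto
  qed
  show "\<forall>a p c b q d. word_S \<Sigma> a p c \<noteq> None \<and> word_S \<Sigma> a p c = word_S \<Sigma> b q d \<longrightarrow> a = b \<and> p = q \<and> c = d"
    by (auto simp: word_S_def split: if_splits)
  show "\<forall>a\<in>words \<Sigma>. \<forall>b. imm_succ (words \<Sigma>) prefix a b \<longrightarrow> (\<exists>p c. word_S \<Sigma> a p c = Some b)"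
  proof (intro ballI allI impI)
    fix a b assume a: "a \<in> words \<Sigma>" and "imm_succ (words \<Sigma>) prefix a b"
    then obtain c where "c \<in> \<Sigma>" "b = a @ [c]" using imm_succ_words by blast
    then have "word_S \<Sigma> a [] c = Some b" using a by (simp add: word_S_def words_iff)
    then show "\<exists>p c. word_S \<Sigma> a p c = Some b" by blast
  qed
qed



lemma B2D:
  assumes "boring_family \<Sigma> E" "m \<le> n" "e1 \<in> E m" "e2 \<in> E n"
  shows "\<exists>e3\<in>E (Suc n). \<forall>a b. set a \<subseteq> \<Sigma> \<and> length a = m \<and> set b \<subseteq> \<Sigma> \<and> length b = n - m \<longrightarrow>
          e3 (a @ [e1 a] @ b) = e2 (a @ b)"
  using assms unfolding boring_family_def by blast

lemma compose_gap:
  assumes bor: "boring_family \<Sigma> E" and spF: "sp \<Sigma> F" and gF: "gapok \<Sigma> E F"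
    and e: "e \<in> E k" and x0: "x0 \<in> \<Sigma>"
  shows "\<exists>e'\<in>E (length (F (replicate k x0))). \<forall>u\<in>words \<Sigma>. k \<le> length u \<longrightarrow>
           e' (take (length (F (replicate k x0))) (F u)) = e (take k u)"
proof -
  define r where "r n = length (F (replicate n x0))" for n
  have rF: "length (F u) = r (length u)" if "u \<in> words \<Sigma>" for u
    unfolding r_def using sp_len[OF spF that, of "replicate (length u) x0"] x0 by auto
  have rmono: "r i < r i'" if "i < i'" for i i'
    unfolding r_def using sp_strict[OF spF, of "replicate i x0" "replicate i' x0"] x0 that by auto
  have rmono': "r i \<le> r i'" if "i \<le> i'" for i i'
    using rmono that by (cases "i = i'") (auto simp: order_le_less)
  have rnth: "F u ! r i = u ! i" if "u \<in> words \<Sigma>" "i < length u" for u i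
  proof -
    have "length (F (take i u)) = r i" using rF[of "take i u"] that by auto
    then show ?thesis using sp_nth[OF spF that] by simp
  qed
  have claim: "\<forall>i. j \<le> r k \<longrightarrow> i \<le> k \<longrightarrow> (\<forall>i'<i. r i' < j) \<longrightarrow> (\<forall>i'. i \<le> i' \<and> i' < k \<longrightarrow> j \<le> r i') \<longrightarrow>
      (\<exists>e'\<in>E (j + (k - i)). \<forall>u\<in>words \<Sigma>. k \<le> length u \<longrightarrow> e' (take j (F u) @ drop i (take k u)) = e (take k u))"
    for j
  proof (induction j)
    case 0
    show ?case
    proof (intro allI impI)
      fix i assume "i \<le> k" "\<forall>i'<i. r i' < 0"
      then have "i = 0" by (cases i) auto
      then show "\<exists>e'\<in>E (0 + (k - i)). \<forall>u\<in>words \<Sigma>. k \<le> length u \<longrightarrow> e' (take 0 (F u) @ drop i (take k u)) = e (take k u)"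
        using e by auto
    qed
  next
    case (Suc j)
    show ?case
    proof (intro allI impI)
      fix i assume H: "Suc j \<le> r k" and ik: "i \<le> k" and A: "\<forall>i'<i. r i' < Suc j"
        and B: "\<forall>i'. i \<le> i' \<and> i' < k \<longrightarrow> Suc j \<le> r i'"
      have long: "Suc j \<le> length (F u)" if "u \<in> words \<Sigma>" "k \<le> length u" for u
        using rF[OF that(1)] rmono'[OF that(2)] H by simp
      show "\<exists>e'\<in>E (Suc j + (k - i)). \<forall>u\<in>words \<Sigma>. k \<le> length u \<longrightarrow> e' (take (Suc j) (F u) @ drop i (take k u)) = e (take k u)"
      proof (cases "0 < i \<and> r (i - 1) = j")
        case True
        define i0 where "i0 = i - 1"
        have i: "i = Suc i0" "r i0 = j" using True unfolding i0_def by auto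
        have "\<forall>i'<i0. r i' < j" using rmono i by auto
        moreover have "\<forall>i'. i0 \<le> i' \<and> i' < k \<longrightarrow> j \<le> r i'"
        proof (intro allI impI)
          fix i' assume "i0 \<le> i' \<and> i' < k"
          then show "j \<le> r i'" using B[rule_format, of i'] i by (cases "i' = i0") auto
        qed
        moreover have "j \<le> r k" "i0 \<le> k" using H ik i by auto
        ultimately have "\<exists>e'\<in>E (j + (k - i0)). \<forall>u\<in>words \<Sigma>. k \<le> length u \<longrightarrow> e' (take j (F u) @ drop i0 (take k u)) = e (take k u)"
          using Suc.IH by blast
        then obtain e' where e': "e' \<in> E (j + (k - i0))"
          "\<forall>u\<in>words \<Sigma>. k \<le> length u \<longrightarrow> e' (take j (F u) @ drop i0 (take k u)) = e (take k u)"
          by blast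
        have ar: "Suc j + (k - i) = j + (k - i0)" using i ik by simp
        show ?thesis
        proof (rule bexI[of _ e'])
          show "e' \<in> E (Suc j + (k - i))" unfolding ar by (rule e'(1))
          show "\<forall>u\<in>words \<Sigma>. k \<le> length u \<longrightarrow> e' (take (Suc j) (F u) @ drop i (take k u)) = e (take k u)"
          proof (intro ballI impI)
            fix u assume u: "u \<in> words \<Sigma>" "k \<le> length u"
            have jl: "j < length (F u)" using long[OF u] by simp
            have i0l: "i0 < length u" "i0 < length (take k u)" using i ik u by auto
            have "take (Suc j) (F u) = take j (F u) @ [F u ! j]" using jl by (simp add: take_Suc_conv_app_nth)
            also have "F u ! j = u ! i0" using rnth[OF u(1) i0l(1)] i by simp
            finally have t1: "take (Suc j) (F u) = take j (F u) @ [u ! i0]" .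
            have "drop i0 (take k u) = (take k u) ! i0 # drop (Suc i0) (take k u)"
              using i0l(2) by (rule Cons_nth_drop_Suc[symmetric])
            also have "(take k u) ! i0 = u ! i0" using i ik by simp
            finally have t2: "drop i0 (take k u) = u ! i0 # drop i (take k u)" using i by simp
            have "take (Suc j) (F u) @ drop i (take k u) = take j (F u) @ drop i0 (take k u)"
              using t1 t2 by simp
            then show "e' (take (Suc j) (F u) @ drop i (take k u)) = e (take k u)" using e'(2) u by simp
          qed
        qed
      next
        case False
        have noj: "r i' \<noteq> j" for i'
        proof
          assume rj: "r i' = j"
          show False
          proof (cases "i' < i")
            case True
            show False
            proof (cases "i' = i - 1")
              case True then show False using False \<open>i' < i\<close> rj by auto
            next
              case False
              then have "i' < i - 1" using \<open>i' < i\<close> by simp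
              then have "r i' < r (i - 1)" by (rule rmono)
              moreover have "r (i - 1) < Suc j" using A \<open>i' < i\<close> by simp
              ultimately show False using rj by simp
            qed
          next
            case False
            show False
            proof (cases "i' < k")
              case True then show False using B[rule_format, of i'] False rj by auto
            next
              case False then have "r k \<le> r i'" using rmono' by simp
              then show False using H rj by simp
            qed
          qed
        qed
        have "\<forall>i'<i. r i' < j" using A noj by (metis less_Suc_eq)
        moreover have "\<forall>i'. i \<le> i' \<and> i' < k \<longrightarrow> j \<le> r i'" using B by auto
        moreover have "j \<le> r k" using H by auto
        ultimately have "\<exists>e'\<in>E (j + (k - i)). \<forall>u\<in>words \<Sigma>. k \<le> length u \<longrightarrow> e' (take j (F u) @ drop i (take k u)) = e (take k u)"
          using Suc.IH ik by blast
        then obtain e2 where e2: "e2 \<in> E (j + (k - i))"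
          "\<forall>u\<in>words \<Sigma>. k \<le> length u \<longrightarrow> e2 (take j (F u) @ drop i (take k u)) = e (take k u)"
          by blast
        have "j \<notin> {length (F a) | a. a \<in> words \<Sigma>}"
        proof
          assume "j \<in> {length (F a) | a. a \<in> words \<Sigma>}"
          then obtain a where "a \<in> words \<Sigma>" "j = length (F a)" by blast
          then have "r (length a) = j" using rF by simp
          then show False using noj by blast
        qed
        then obtain e1 where e1: "e1 \<in> E j" "\<forall>a\<in>words \<Sigma>. j < length (F a) \<longrightarrow> F a ! j = e1 (take j (F a))"
          using gF unfolding gapok_def by blast
        obtain e3 where e3: "e3 \<in> E (Suc (j + (k - i)))"
          "\<forall>a b. set a \<subseteq> \<Sigma> \<and> length a = j \<and> set b \<subseteq> \<Sigma> \<and> length b = (j + (k - i)) - j \<longrightarrow>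
             e3 (a @ [e1 a] @ b) = e2 (a @ b)"
          using B2D[OF bor _ e1(1) e2(1)] by auto
        show ?thesis
        proof (rule bexI[of _ e3])
          show "e3 \<in> E (Suc j + (k - i))" using e3 by simp
          show "\<forall>u\<in>words \<Sigma>. k \<le> length u \<longrightarrow> e3 (take (Suc j) (F u) @ drop i (take k u)) = e (take k u)"
          proof (intro ballI impI)
            fix u assume u: "u \<in> words \<Sigma>" "k \<le> length u"
            have jl: "j < length (F u)" using long[OF u] by simp
            have fu: "F u \<in> words \<Sigma>" using sp_im[OF spF u(1)] .
            have t1: "take (Suc j) (F u) = take j (F u) @ [e1 (take j (F u))]"
              using jl e1(2) u(1) by (simp add: take_Suc_conv_app_nth)
            have s1: "set (take j (F u)) \<subseteq> \<Sigma>" using words_take[OF fu] by (simp add: words_iff)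
            have s2: "set (drop i (take k u)) \<subseteq> \<Sigma>" using words_drop[OF words_take[OF u(1)]] by (simp add: words_iff)
            have l1: "length (take j (F u)) = j" using jl by simp
            have l2: "length (drop i (take k u)) = (j + (k - i)) - j" using u by simp
            have "e3 (take j (F u) @ [e1 (take j (F u))] @ drop i (take k u)) = e2 (take j (F u) @ drop i (take k u))"
              using e3(2) s1 s2 l1 l2 by blast
            then show "e3 (take (Suc j) (F u) @ drop i (take k u)) = e (take k u)" using t1 e2(2) u by simp
          qed
        qed
      qed
    qed
  qed
  have "\<exists>e'\<in>E (r k + (k - k)). \<forall>u\<in>words \<Sigma>. k \<le> length u \<longrightarrow> e' (take (r k) (F u) @ drop k (take k u)) = e (take k u)"
  proof -
    have "\<forall>i'<k. r i' < r k" using rmono by blast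
    moreover have "\<forall>i'. k \<le> i' \<and> i' < k \<longrightarrow> r k \<le> r i'" by auto
    ultimately show ?thesis using claim[of "r k", rule_format, of k] by blast
  qed
  then show ?thesis unfolding r_def by simp
qed



lemma id_M: assumes x0: "x0 \<in> \<Sigma>" shows "(\<lambda>a. a) \<in> M_E \<Sigma> E"
proof -
  have "sp \<Sigma> (\<lambda>a. a)" unfolding sp_def by auto
  moreover have "gapok \<Sigma> E (\<lambda>a. a)" unfolding gapok_def
  proof (intro allI impI)
    fix l assume "l \<notin> {length a |a. a \<in> words \<Sigma>}"
    moreover have "replicate l x0 \<in> words \<Sigma>" using x0 by blast
    ultimately show "\<exists>e\<in>E l. \<forall>a\<in>words \<Sigma>. l < length a \<longrightarrow> a ! l = e (take l a)"
      by (metis (mono_tags, lifting) length_replicate mem_Collect_eq)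
  qed
  ultimately show ?thesis using ME_iff by blast
qed

lemma comp_M:
  assumes bor: "boring_family \<Sigma> E" and x0: "x0 \<in> \<Sigma>" and FM: "F \<in> M_E \<Sigma> E" and GM: "G \<in> M_E \<Sigma> E"
  shows "(\<lambda>a. F (G a)) \<in> M_E \<Sigma> E"
proof -
  have spF: "sp \<Sigma> F" and gF: "gapok \<Sigma> E F" using FM ME_iff by blast+
  have spG: "sp \<Sigma> G" and gG: "gapok \<Sigma> E G" using GM ME_iff by blast+
  have sp: "sp \<Sigma> (\<lambda>a. F (G a))" unfolding sp_def
  proof (intro conjI ballI impI)
    fix a assume "a \<in> words \<Sigma>" then show "F (G a) \<in> words \<Sigma>" using sp_im[OF spF] sp_im[OF spG] by blast
  next
    have "G ` words \<Sigma> \<subseteq> words \<Sigma>" using sp_im[OF spG] by blast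
    then have "inj_on F (G ` words \<Sigma>)" using sp_inj[OF spF] inj_on_subset by blast
    then show "inj_on (\<lambda>a. F (G a)) (words \<Sigma>)" using sp_inj[OF spG] comp_inj_on unfolding comp_def by blast
  next
    fix a b assume "a \<in> words \<Sigma>" "b \<in> words \<Sigma>" "length a = length b"
    then show "length (F (G a)) = length (F (G b))"
      using sp_len[OF spG] sp_len[OF spF] sp_im[OF spG] by blast
  next
    fix a c assume a: "a \<in> words \<Sigma>" and c: "c \<in> \<Sigma>"
    have ga: "G a \<in> words \<Sigma>" "G (a @ [c]) \<in> words \<Sigma>" using sp_im[OF spG] a c by blast+
    have "prefix (F (G a) @ [c]) (F (G a @ [c]))" using sp_pre[OF spF ga(1) c] .
    also have "prefix (F (G a @ [c])) (F (G (a @ [c])))"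
      using sp_mono[OF spF ga(2) sp_pre[OF spG a c]] .
    finally show "prefix (F (G a) @ [c]) (F (G (a @ [c])))" .
  qed
  have "gapok \<Sigma> E (\<lambda>a. F (G a))" unfolding gapok_def
  proof (intro allI impI)
    fix l assume l: "l \<notin> {length (F (G a)) |a. a \<in> words \<Sigma>}"
    show "\<exists>e\<in>E l. \<forall>a\<in>words \<Sigma>. l < length (F (G a)) \<longrightarrow> F (G a) ! l = e (take l (F (G a)))"
    proof (cases "l \<in> {length (F a) |a. a \<in> words \<Sigma>}")
      case False
      then obtain e where e: "e \<in> E l" "\<forall>a\<in>words \<Sigma>. l < length (F a) \<longrightarrow> F a ! l = e (take l (F a))"
        using gF unfolding gapok_def by blast
      show ?thesis using e sp_im[OF spG] by blast
    next
      case True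
      then obtain b where b: "b \<in> words \<Sigma>" "l = length (F b)" by blast
      define k where "k = length b"
      have nk: "k \<notin> {length (G a) |a. a \<in> words \<Sigma>}"
      proof
        assume "k \<in> {length (G a) |a. a \<in> words \<Sigma>}"
        then obtain a where a: "a \<in> words \<Sigma>" "k = length (G a)" by blast
        then have "length (F (G a)) = length (F b)" using sp_len[OF spF sp_im[OF spG a(1)] b(1)] k_def by simp
        then have "l \<in> {length (F (G a)) |a. a \<in> words \<Sigma>}" using a(1) b(2) by (metis (mono_tags, lifting) mem_Collect_eq)
        then show False using l by blast
      qed
      then obtain e where e: "e \<in> E k" "\<forall>a\<in>words \<Sigma>. k < length (G a) \<longrightarrow> G a ! k = e (take k (G a))"
        using gG unfolding gapok_def by blast
      have rk: "length (F (replicate k x0)) = l"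
        using sp_len[OF spF _ b(1), of "replicate k x0"] x0 b(2) k_def by auto
      obtain e' where e': "e' \<in> E l" "\<forall>u\<in>words \<Sigma>. k \<le> length u \<longrightarrow> e' (take l (F u)) = e (take k u)"
        using compose_gap[OF bor spF gF e(1) x0] rk by auto
      show ?thesis
      proof (intro bexI[OF _ e'(1)] ballI impI)
        fix a assume a: "a \<in> words \<Sigma>" and la: "l < length (F (G a))"
        have ga: "G a \<in> words \<Sigma>" using sp_im[OF spG a] .
        have kl: "k < length (G a)"
        proof (rule ccontr)
          assume "\<not> k < length (G a)"
          then have "length (G a) < k \<or> length (G a) = k" by auto
          then show False
          proof
            assume "length (G a) < k"
            then have "length (F (G a)) < length (F b)" using sp_strict[OF spF ga b(1)] k_def by simp
            then show False using la b(2) by simp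
          next
            assume "length (G a) = k"
            then show False using nk ga a by blast
          qed
        qed
        have "length (F (take k (G a))) = l"
          using sp_len[OF spF _ b(1), of "take k (G a)"] ga kl b(2) k_def by auto
        then have "F (G a) ! l = G a ! k" using sp_nth[OF spF ga kl] by simp
        also have "\<dots> = e (take k (G a))" using e(2) a kl by blast
        also have "\<dots> = e' (take l (F (G a)))" using e'(2) ga kl by simp
        finally show "F (G a) ! l = e' (take l (F (G a)))" .
      qed
    qed
  qed
  then show ?thesis using sp ME_iff by blast
qed



lemma pref_nth: "prefix x y \<Longrightarrow> l < length x \<Longrightarrow> y ! l = x ! l \<and> take l y = take l x"
  by (auto elim!: prefixE simp: nth_append)

lemma lim_M:
  assumes FsM: "\<forall>i. Fs i \<in> M_E \<Sigma> E"
    and agr: "\<forall>i. \<forall>a\<in>words \<Sigma>. length a \<le> i \<longrightarrow> Fs i a = Fs (Suc i) a"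
  shows "(\<lambda>a. Fs (length a) a) \<in> M_E \<Sigma> E \<and> (\<forall>i. \<forall>a\<in>words \<Sigma>. length a \<le> i \<longrightarrow> Fs (length a) a = Fs i a)"
proof -
  have sps: "sp \<Sigma> (Fs i)" and gs: "gapok \<Sigma> E (Fs i)" for i using FsM ME_iff by blast+
  have agr2: "Fs i a = Fs (i + d) a" if "a \<in> words \<Sigma>" "length a \<le> i" for a i d
  proof (induction d)
    case 0 then show ?case by simp
  next
    case (Suc d)
    have "length a \<le> i + d" using that by simp
    then have "Fs (i + d) a = Fs (Suc (i + d)) a" using agr that(1) by blast
    then show ?case using Suc by simp
  qed
  define G where "G a = Fs (length a) a" for a
  have Gi: "G a = Fs i a" if "a \<in> words \<Sigma>" "length a \<le> i" for a i
    using agr2[OF that(1) order_refl, of "i - length a"] that unfolding G_def by simp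
  have spG: "sp \<Sigma> G" unfolding sp_def
  proof (intro conjI ballI impI)
    fix a assume "a \<in> words \<Sigma>" then show "G a \<in> words \<Sigma>" unfolding G_def using sp_im[OF sps] by blast
  next
    show "inj_on G (words \<Sigma>)"
    proof (rule inj_onI)
      fix a b assume ab: "a \<in> words \<Sigma>" "b \<in> words \<Sigma>" "G a = G b"
      let ?i = "max (length a) (length b)"
      have "Fs ?i a = Fs ?i b" using Gi[OF ab(1), of ?i] Gi[OF ab(2), of ?i] ab(3) by simp
      then show "a = b" using sp_inj[OF sps] ab(1,2) by (meson inj_onD)
    qed
  next
    fix a b assume ab: "a \<in> words \<Sigma>" "b \<in> words \<Sigma>" "length a = length b"
    then show "length (G a) = length (G b)" unfolding G_def using sp_len[OF sps ab] by simp
  next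
    fix a c assume a: "a \<in> words \<Sigma>" and c: "c \<in> \<Sigma>"
    have "G (a @ [c]) = Fs (Suc (length a)) (a @ [c])" unfolding G_def by simp
    moreover have "G a = Fs (Suc (length a)) a" using Gi[OF a] by simp
    ultimately show "prefix (G a @ [c]) (G (a @ [c]))" using sp_pre[OF sps a c] by simp
  qed
  have "gapok \<Sigma> E G" unfolding gapok_def
  proof (intro allI impI)
    fix l assume l: "l \<notin> {length (G a) |a. a \<in> words \<Sigma>}"
    define i where "i = Suc l"
    have nl: "l \<notin> {length (Fs i a) |a. a \<in> words \<Sigma>}"
    proof
      assume "l \<in> {length (Fs i a) |a. a \<in> words \<Sigma>}"
      then obtain a where a: "a \<in> words \<Sigma>" "l = length (Fs i a)" by blast
      show False
      proof (cases "length a \<le> i")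
        case True
        then have "l = length (G a)" using Gi[OF a(1) True] a(2) by simp
        then have "l \<in> {length (G a) |a. a \<in> words \<Sigma>}" using a(1) by (metis (mono_tags, lifting) mem_Collect_eq)
        then show False using l by blast
      next
        case False
        then have "i < length (Fs i a)" using sp_len_ge[OF sps a(1), of i] by simp
        then show False using a(2) i_def by linarith
      qed
    qed
    then obtain e where e: "e \<in> E l" "\<forall>a\<in>words \<Sigma>. l < length (Fs i a) \<longrightarrow> Fs i a ! l = e (take l (Fs i a))"
      using gs[of i] unfolding gapok_def by blast
    show "\<exists>e\<in>E l. \<forall>a\<in>words \<Sigma>. l < length (G a) \<longrightarrow> G a ! l = e (take l (G a))"
    proof (intro bexI[OF _ e(1)] ballI impI)
      fix a assume a: "a \<in> words \<Sigma>" and la: "l < length (G a)"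
      show "G a ! l = e (take l (G a))"
      proof (cases "length a \<le> i")
        case True then show ?thesis using Gi[OF a True] e(2) a la by simp
      next
        case False
        let ?a' = "take i a"
        have a': "?a' \<in> words \<Sigma>" "length ?a' \<le> i" using a by auto
        have ga': "G ?a' = Fs i ?a'" using Gi[OF a'] .
        have "i \<le> length (Fs i ?a')" using sp_len_ge[OF sps a'(1)] False by simp
        then have ll: "l < length (G ?a')" using ga' i_def by (simp only:)
        have "prefix (G ?a') (G a)" using sp_mono[OF spG a take_is_prefix] .
        then have "G a ! l = G ?a' ! l \<and> take l (G a) = take l (G ?a')" using pref_nth ll by blast
        moreover have "G ?a' ! l = e (take l (G ?a'))" using e(2) a'(1) ll ga' by simp
        ultimately show ?thesis by simp
      qed
    qed
  qed
  then have "G \<in> M_E \<Sigma> E" using spG ME_iff by blast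
  moreover have "\<forall>i. \<forall>a\<in>words \<Sigma>. length a \<le> i \<longrightarrow> Fs (length a) a = Fs i a"
  proof (intro allI ballI impI)
    fix i a assume "a \<in> words \<Sigma>" "length a \<le> i"
    then show "Fs (length a) a = Fs i a" using Gi[of a i] unfolding G_def by simp
  qed
  ultimately show ?thesis unfolding G_def by (simp only: )
qed



definition ins :: "nat \<Rightarrow> ('c list \<Rightarrow> 'c) \<Rightarrow> 'c list \<Rightarrow> 'c list" where
  "ins L g w = (if length w < L then w else take L w @ [g (take L w)] @ drop L w)"

lemma ins_len: "length (ins L g w) = (if length w < L then length w else Suc (length w))"
  by (simp add: ins_def)

lemma ins_M:
  assumes g: "\<And>x. x \<in> words \<Sigma> \<Longrightarrow> length x = L \<Longrightarrow> g x \<in> \<Sigma>" and e: "e \<in> E L"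
    and eg: "\<And>x. x \<in> words \<Sigma> \<Longrightarrow> length x = L \<Longrightarrow> e x = g x" and x0: "x0 \<in> \<Sigma>"
  shows "ins L g \<in> M_E \<Sigma> E" "tilde_range (words \<Sigma>) prefix (ins L g) = UNIV - {L}"
proof -
  have sp: "sp \<Sigma> (ins L g)" unfolding sp_def
  proof (intro conjI ballI impI)
    fix a assume a: "a \<in> words \<Sigma>"
    show "ins L g a \<in> words \<Sigma>"
    proof (cases "length a < L")
      case True then show ?thesis using a by (simp add: ins_def)
    next
      case False
      then have "g (take L a) \<in> \<Sigma>" using g[of "take L a"] a by auto
      then show ?thesis using False a by (auto simp: ins_def words_iff dest: in_set_takeD in_set_dropD)
    qed
  next
    show "inj_on (ins L g) (words \<Sigma>)"
    proof (rule inj_onI)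
      fix a b assume a: "a \<in> words \<Sigma>" and b: "b \<in> words \<Sigma>" and eq: "ins L g a = ins L g b"
      have len: "length (ins L g a) = length (ins L g b)" using eq by simp
      show "a = b"
      proof (cases "length a < L")
        case True
        then show ?thesis
        proof (cases "length b < L")
          case True then show ?thesis using eq \<open>length a < L\<close> by (simp add: ins_def)
        next
          case False then show ?thesis using len \<open>length a < L\<close> by (simp add: ins_len)
        qed
      next
        case fa: False
        then show ?thesis
        proof (cases "length b < L")
          case True then show ?thesis using len fa by (simp add: ins_len)
        next
          case False
          have "take L a @ [g (take L a)] @ drop L a = take L b @ [g (take L b)] @ drop L b"
            using eq fa False by (simp add: ins_def)
          then have "take L a = take L b \<and> [g (take L a)] @ drop L a = [g (take L b)] @ drop L b"
            using fa False by (subst (asm) append_eq_append_conv) auto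
          then have "take L a = take L b" "drop L a = drop L b" by auto
          then show ?thesis by (metis append_take_drop_id)
        qed
      qed
    qed
  next
    fix a b assume "a \<in> words \<Sigma>" "b \<in> words \<Sigma>" "length a = length b"
    then show "length (ins L g a) = length (ins L g b)" by (simp add: ins_len)
  next
    fix a c assume a: "a \<in> words \<Sigma>" and c: "c \<in> \<Sigma>"
    show "prefix (ins L g a @ [c]) (ins L g (a @ [c]))"
    proof (cases "Suc (length a) < L")
      case True then show ?thesis by (simp add: ins_def)
    next
      case False
      show ?thesis
      proof (cases "length a < L")
        case True
        then have "length a = L - 1" "Suc (length a) = L" using False by auto
        then show ?thesis using True by (simp add: ins_def)
      next
        case False
        then show ?thesis by (simp add: ins_def)
      qed
    qed
  qed
  have rng: "{length (ins L g a) |a. a \<in> words \<Sigma>} = UNIV - {L}"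
  proof (rule set_eqI, rule iffI)
    fix l assume "l \<in> {length (ins L g a) |a. a \<in> words \<Sigma>}"
    then obtain a where "l = length (ins L g a)" by blast
    then show "l \<in> UNIV - {L}" by (simp add: ins_len)
  next
    fix l assume l: "l \<in> UNIV - {L}"
    show "l \<in> {length (ins L g a) |a. a \<in> words \<Sigma>}"
    proof (cases "l < L")
      case True
      then have "l = length (ins L g (replicate l x0))" by (simp add: ins_len)
      moreover have "replicate l x0 \<in> words \<Sigma>" using x0 by blast
      ultimately show ?thesis by blast
    next
      case False
      then have "L < l" using l by auto
      then have "l = length (ins L g (replicate (l - 1) x0))" by (simp add: ins_len)
      moreover have "replicate (l - 1) x0 \<in> words \<Sigma>" using x0 by blast
      ultimately show ?thesis by blast
    qed
  qed
  have "gapok \<Sigma> E (ins L g)" unfolding gapok_def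
  proof (intro allI impI)
    fix l assume "l \<notin> {length (ins L g a) |a. a \<in> words \<Sigma>}"
    then have lL: "l = L" using rng by blast
    show "\<exists>e\<in>E l. \<forall>a\<in>words \<Sigma>. l < length (ins L g a) \<longrightarrow> ins L g a ! l = e (take l (ins L g a))"
    proof (intro bexI[of _ e] ballI impI)
      show "e \<in> E l" using e lL by simp
      fix a assume a: "a \<in> words \<Sigma>" and la: "l < length (ins L g a)"
      then have aL: "\<not> length a < L" using lL by (auto simp: ins_len split: if_splits)
      then have "ins L g a ! l = g (take L a)" "take l (ins L g a) = take L a"
        using lL by (auto simp: ins_def nth_append)
      moreover have "e (take L a) = g (take L a)" using eg[of "take L a"] a aL by auto
      ultimately show "ins L g a ! l = e (take l (ins L g a))" by simp
    qed
  qed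
  then show "ins L g \<in> M_E \<Sigma> E" using sp ME_iff by blast
  show "tilde_range (words \<Sigma>) prefix (ins L g) = UNIV - {L}" using sp_trange[OF sp] rng by simp
qed



lemma prefix_take_le: "prefix x y \<Longrightarrow> length x \<le> L \<Longrightarrow> prefix x (take L y)"
  by (auto elim!: prefixE simp: take_append)

lemma M2_lemma:
  assumes bor: "boring_family \<Sigma> E" and x0: "x0 \<in> \<Sigma>" and FM: "F \<in> M_E \<Sigma> E"
    and pos: "0 < tilde (words \<Sigma>) prefix F n"
    and sk: "skips (words \<Sigma>) prefix F (tilde (words \<Sigma>) prefix F n - 1)"
  shows "\<exists>F1\<in>M_E \<Sigma> E. \<exists>F2\<in>M_E \<Sigma> E. skips_only (words \<Sigma>) prefix F2 (tilde (words \<Sigma>) prefix F n - 1) \<and>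
           (\<forall>a\<in>words \<Sigma>. level (words \<Sigma>) prefix a \<le> n \<longrightarrow> F2 (F1 a) = F a)"
proof -
  have spF: "sp \<Sigma> F" and gF: "gapok \<Sigma> E F" using FM ME_iff by blast+
  have rn: "replicate n x0 \<in> words \<Sigma>" using x0 by blast
  define L where "L = tilde (words \<Sigma>) prefix F n - 1"
  have tn: "tilde (words \<Sigma>) prefix F n = length (F (replicate n x0))" using sp_tilde[OF spF rn] by simp
  have TL: "length (F (replicate n x0)) = Suc L" using pos tn L_def by simp
  have lenn: "length (F a) = Suc L" if "a \<in> words \<Sigma>" "length a = n" for a
    using sp_len[OF spF that(1) rn] that TL by simp
  have nL: "L \<notin> {length (F a) |a. a \<in> words \<Sigma>}" using sk sp_trange[OF spF] L_def unfolding skips_def by simp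
  then obtain eL where eL: "eL \<in> E L" "\<forall>a\<in>words \<Sigma>. L < length (F a) \<longrightarrow> F a ! L = eL (take L (F a))"
    using gF unfolding gapok_def by blast
  have lenlt: "length (F a) < L" if "a \<in> words \<Sigma>" "length a < n" for a
  proof -
    have "length (F a) < Suc L" using sp_strict[OF spF that(1) rn] that TL by simp
    moreover have "length (F a) \<noteq> L" using nL that(1) by blast
    ultimately show ?thesis by simp
  qed
  have gapfact: "F a = take L (F a) @ [eL (take L (F a))]" if "a \<in> words \<Sigma>" "length a = n" for a
  proof -
    have l: "length (F a) = Suc L" using lenn that .
    then have "F a = take L (F a) @ [F a ! L]" by (metis lessI take_Suc_conv_app_nth take_all order_refl)
    also have "F a ! L = eL (take L (F a))" using eL(2) that(1) l by simp
    finally show ?thesis .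
  qed
  have eLS: "eL x \<in> \<Sigma>" if "x \<in> words \<Sigma>" "length x = L" for x
  proof -
    have "\<forall>n. \<forall>e\<in>E n. \<forall>a. set a \<subseteq> \<Sigma> \<and> length a = n \<longrightarrow> e a \<in> \<Sigma>"
      using bor unfolding boring_family_def by (rule conjunct1)
    then show ?thesis using eL(1) that unfolding words_iff by blast
  qed
  define F2 where "F2 = ins L eL"
  have F2M: "F2 \<in> M_E \<Sigma> E" and F2r: "tilde_range (words \<Sigma>) prefix F2 = UNIV - {L}"
    using ins_M[where g=eL and \<Sigma>=\<Sigma> and L=L and e=eL and E=E, OF eLS eL(1) refl x0] unfolding F2_def by blast+
  define F1 where "F1 w = (if length w < n then F w else take L (F (take n w)) @ drop n w)" for w
  have F1len: "length (F1 w) = (if length w < n then length (F w) else L + (length w - n))" if "w \<in> words \<Sigma>" for w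
  proof (cases "length w < n")
    case False
    then have "length (F (take n w)) = Suc L" using lenn[of "take n w"] that by auto
    then show ?thesis unfolding F1_def using False by simp
  qed (simp add: F1_def)
  have spF1: "sp \<Sigma> F1" unfolding sp_def
  proof (intro conjI ballI impI)
    fix a assume a: "a \<in> words \<Sigma>"
    show "F1 a \<in> words \<Sigma>" unfolding F1_def using a sp_im[OF spF] by auto
  next
    show "inj_on F1 (words \<Sigma>)"
    proof (rule inj_onI)
      fix a b assume a: "a \<in> words \<Sigma>" and b: "b \<in> words \<Sigma>" and eq: "F1 a = F1 b"
      have len: "length (F1 a) = length (F1 b)" using eq by simp
      show "a = b"
      proof (cases "length a < n")
        case ta: True
        show ?thesis
        proof (cases "length b < n")
          case True
          then have "F a = F b" using eq ta unfolding F1_def by simp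
          then show ?thesis using sp_inj[OF spF] a b by (meson inj_onD)
        next
          case False
          then show ?thesis using len F1len[OF a] F1len[OF b] lenlt[OF a ta] ta by simp
        qed
      next
        case fa: False
        show ?thesis
        proof (cases "length b < n")
          case True
          then show ?thesis using len F1len[OF a] F1len[OF b] lenlt[OF b True] fa by simp
        next
          case False
          have "length (F (take n a)) = Suc L" using lenn[of "take n a"] words_take[OF a] fa by simp
          then have la: "length (take L (F (take n a))) = L" by simp
          have "length (F (take n b)) = Suc L" using lenn[of "take n b"] words_take[OF b] False by simp
          then have lb: "length (take L (F (take n b))) = L" by simp
          have "take L (F (take n a)) @ drop n a = take L (F (take n b)) @ drop n b"
            using eq fa False unfolding F1_def by simp
          then have "take L (F (take n a)) = take L (F (take n b))" "drop n a = drop n b"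
            using la lb by (auto simp: append_eq_append_conv)
          moreover have "F (take n a) = F (take n b)"
          proof -
            have ga: "F (take n a) = take L (F (take n a)) @ [eL (take L (F (take n a)))]"
              using gapfact[of "take n a"] words_take[OF a] fa by simp
            have gb: "F (take n b) = take L (F (take n b)) @ [eL (take L (F (take n b)))]"
              using gapfact[of "take n b"] words_take[OF b] False by simp
            show ?thesis using ga gb calculation(1) by metis
          qed
          then have "take n a = take n b" using sp_inj[OF spF] a b by (meson inj_onD words_take)
          ultimately show ?thesis by (metis append_take_drop_id)
        qed
      qed
    qed
  next
    fix a b assume a: "a \<in> words \<Sigma>" and b: "b \<in> words \<Sigma>" and l: "length a = length b"
    show "length (F1 a) = length (F1 b)" using F1len[OF a] F1len[OF b] l sp_len[OF spF a b l] by simp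
  next
    fix a c assume a: "a \<in> words \<Sigma>" and c: "c \<in> \<Sigma>"
    show "prefix (F1 a @ [c]) (F1 (a @ [c]))"
    proof (cases "Suc (length a) < n")
      case True then show ?thesis unfolding F1_def using sp_pre[OF spF a c] by simp
    next
      case False
      show ?thesis
      proof (cases "length a < n")
        case True
        then have sn: "Suc (length a) = n" using False by simp
        have "F1 (a @ [c]) = take L (F (a @ [c]))" unfolding F1_def using sn by simp
        moreover have "F1 a = F a" unfolding F1_def using True by simp
        moreover have "length (F a @ [c]) \<le> L" using lenlt[OF a True] by simp
        ultimately show ?thesis using prefix_take_le[OF sp_pre[OF spF a c]] by simp
      next
        case False
        then show ?thesis unfolding F1_def by simp
      qed
    qed
  qed
  have "gapok \<Sigma> E F1" unfolding gapok_def
  proof (intro allI impI)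
    fix l assume l: "l \<notin> {length (F1 a) |a. a \<in> words \<Sigma>}"
    have lL: "l < L"
    proof (rule ccontr)
      assume "\<not> l < L"
      define r where "r = replicate (n + (l - L)) x0"
      have rw: "r \<in> words \<Sigma>" unfolding r_def using x0 by blast
      have nl: "\<not> length r < n" unfolding r_def by simp
      have "length (F1 r) = (if length r < n then length (F r) else L + (length r - n))" by (rule F1len[OF rw])
      also have "\<dots> = L + (length r - n)" by (rule if_not_P[OF nl])
      finally have "length (F1 (replicate (n + (l - L)) x0)) = L + (n + (l - L) - n)" unfolding r_def by simp
      then have "length (F1 (replicate (n + (l - L)) x0)) = l" using \<open>\<not> l < L\<close> by simp
      moreover have "replicate (n + (l - L)) x0 \<in> words \<Sigma>" using x0 by blast
      ultimately have "l \<in> {length (F1 a) |a. a \<in> words \<Sigma>}" by (metis (mono_tags, lifting) mem_Collect_eq)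
      then show False using l by blast
    qed
    have nlF: "l \<notin> {length (F a) |a. a \<in> words \<Sigma>}"
    proof
      assume "l \<in> {length (F a) |a. a \<in> words \<Sigma>}"
      then obtain b where b: "b \<in> words \<Sigma>" "l = length (F b)" by blast
      show False
      proof (cases "length b < n")
        case True
        then have "F1 b = F b" unfolding F1_def by simp
        then have "l \<in> {length (F1 a) |a. a \<in> words \<Sigma>}" using b by (metis (mono_tags, lifting) mem_Collect_eq)
        then show False using l by blast
      next
        case False
        have "prefix (F (take n b)) (F b)" using sp_mono[OF spF b(1) take_is_prefix] .
        then have "length (F (take n b)) \<le> length (F b)" by (rule prefix_length_le)
        moreover have "length (F (take n b)) = Suc L" using lenn[of "take n b"] words_take[OF b(1)] False by simp
        ultimately show False using b(2) lL by simp
      qed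
    qed
    then obtain e where e: "e \<in> E l" "\<forall>a\<in>words \<Sigma>. l < length (F a) \<longrightarrow> F a ! l = e (take l (F a))"
      using gF unfolding gapok_def by blast
    show "\<exists>e\<in>E l. \<forall>a\<in>words \<Sigma>. l < length (F1 a) \<longrightarrow> F1 a ! l = e (take l (F1 a))"
    proof (intro bexI[OF _ e(1)] ballI impI)
      fix a assume a: "a \<in> words \<Sigma>" and la: "l < length (F1 a)"
      show "F1 a ! l = e (take l (F1 a))"
      proof (cases "length a < n")
        case True then show ?thesis using e(2) a la unfolding F1_def by simp
      next
        case False
        let ?a' = "take n a"
        have a': "?a' \<in> words \<Sigma>" "length ?a' = n" using words_take[OF a] False by auto
        have lf: "length (F ?a') = Suc L" using lenn[OF a'] .
        have f1: "F1 a = take L (F ?a') @ drop n a" unfolding F1_def using False by simp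
        have p1: "prefix (take L (F ?a')) (F1 a)" using f1 by simp
        have p2: "prefix (take L (F ?a')) (F ?a')" by (rule take_is_prefix)
        have ll: "l < length (take L (F ?a'))" using lf lL by simp
        have "F1 a ! l = F ?a' ! l \<and> take l (F1 a) = take l (F ?a')"
          using pref_nth[OF p1 ll] pref_nth[OF p2 ll] by simp
        moreover have "F ?a' ! l = e (take l (F ?a'))" using e(2) a'(1) lf lL by simp
        ultimately show ?thesis by simp
      qed
    qed
  qed
  then have F1M: "F1 \<in> M_E \<Sigma> E" using spF1 ME_iff by blast
  have comp: "\<forall>a\<in>words \<Sigma>. level (words \<Sigma>) prefix a \<le> n \<longrightarrow> F2 (F1 a) = F a"
  proof (intro ballI impI)
    fix a assume a: "a \<in> words \<Sigma>" and "level (words \<Sigma>) prefix a \<le> n"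
    then have an: "length a \<le> n" by simp
    show "F2 (F1 a) = F a"
    proof (cases "length a < n")
      case True
      then show ?thesis using lenlt[OF a True] unfolding F1_def F2_def ins_def by simp
    next
      case False
      then have n: "length a = n" using an by simp
      have "F1 a = take L (F a)" unfolding F1_def using n by simp
      moreover have "length (take L (F a)) = L" using lenn[OF a n] by simp
      ultimately have "F2 (F1 a) = take L (F a) @ [eL (take L (F a))]" unfolding F2_def ins_def by simp
      then show ?thesis using gapfact[OF a n] by metis
    qed
  qed
  have "skips_only (words \<Sigma>) prefix F2 (tilde (words \<Sigma>) prefix F n - 1)"
    unfolding skips_only_def using F2r L_def by simp
  then show ?thesis using F1M F2M comp by blast
qed

lemma M3_lemma:
  assumes bor: "boring_family \<Sigma> E" and x0: "x0 \<in> \<Sigma>" and nm: "n < m"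
  shows "\<exists>F\<in>M_E \<Sigma> E. skips_only (words \<Sigma>) prefix F m \<and>
           (\<forall>a b p c x. a \<in> words \<Sigma> \<and> level (words \<Sigma>) prefix a = n \<and> b \<in> words \<Sigma> \<and> level (words \<Sigma>) prefix b = m \<and>
              word_S \<Sigma> a p c = Some x \<and> prefix x b \<longrightarrow> word_S \<Sigma> b p c = Some (F b))"
proof -
  have B1: "\<forall>n m. m < n \<longrightarrow> (\<exists>e\<in>E n. \<forall>a. set a \<subseteq> \<Sigma> \<and> length a = n \<longrightarrow> e a = a ! m)"
    using bor unfolding boring_family_def by (rule conjunct1[OF conjunct2])
  obtain e where e: "e \<in> E m" "\<forall>a. set a \<subseteq> \<Sigma> \<and> length a = m \<longrightarrow> e a = a ! n"
    using B1[rule_format, OF nm] by blast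
  have g: "(\<lambda>x. x ! n) x \<in> \<Sigma>" if "x \<in> words \<Sigma>" "length x = m" for x
    using words_nth[OF that(1)] that(2) nm by simp
  have eg: "e x = (\<lambda>x. x ! n) x" if "x \<in> words \<Sigma>" "length x = m" for x
    using that e(2) by (simp add: words_iff)
  have M: "ins m (\<lambda>x. x ! n) \<in> M_E \<Sigma> E" "tilde_range (words \<Sigma>) prefix (ins m (\<lambda>x. x ! n)) = UNIV - {m}"
    using ins_M[where g="\<lambda>x. x ! n" and \<Sigma>=\<Sigma> and L=m and e=e and E=E, OF g e(1) eg x0] by blast+
  have "\<forall>a b p c x. a \<in> words \<Sigma> \<and> level (words \<Sigma>) prefix a = n \<and> b \<in> words \<Sigma> \<and> level (words \<Sigma>) prefix b = m \<and>
              word_S \<Sigma> a p c = Some x \<and> prefix x b \<longrightarrow> word_S \<Sigma> b p c = Some (ins m (\<lambda>x. x ! n) b)"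
  proof (intro allI impI)
    fix a b p c x
    assume h: "a \<in> words \<Sigma> \<and> level (words \<Sigma>) prefix a = n \<and> b \<in> words \<Sigma> \<and> level (words \<Sigma>) prefix b = m \<and>
              word_S \<Sigma> a p c = Some x \<and> prefix x b"
    then have a: "a \<in> words \<Sigma>" "length a = n" and b: "b \<in> words \<Sigma>" "length b = m"
      and ws: "word_S \<Sigma> a p c = Some x" and px: "prefix x b" by auto
    then have p: "p = []" "c \<in> \<Sigma>" "x = a @ [c]" by (auto simp: word_S_def split: if_splits)
    have "b ! n = x ! n" using pref_nth[OF px] p a by simp
    then have bn: "b ! n = c" using p a by (simp add: nth_append)
    have "ins m (\<lambda>x. x ! n) b = b @ [c]" using b bn nm by (simp add: ins_def)
    then show "word_S \<Sigma> b p c = Some (ins m (\<lambda>x. x ! n) b)" using b p by (simp add: word_S_def words_iff)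
  qed
  then have "skips_only (words \<Sigma>) prefix (ins m (\<lambda>x. x ! n)) m \<and>
           (\<forall>a b p c x. a \<in> words \<Sigma> \<and> level (words \<Sigma>) prefix a = n \<and> b \<in> words \<Sigma> \<and> level (words \<Sigma>) prefix b = m \<and>
              word_S \<Sigma> a p c = Some x \<and> prefix x b \<longrightarrow> word_S \<Sigma> b p c = Some (ins m (\<lambda>x. x ! n) b))"
    using M(2) unfolding skips_only_def by (intro conjI)
  then show ?thesis using M(1) by (rule bexI)
qed

theorem mainTheorem12:
  fixes \<Sigma> :: "'c set" and E :: "nat \<Rightarrow> ('c list \<Rightarrow> 'c) set"
  assumes "finite \<Sigma>" and "\<Sigma> \<noteq> {}"
    and "boring_family \<Sigma> E"
  shows "is_SM_tree (words \<Sigma>) prefix \<Sigma> (word_S \<Sigma>) (M_E \<Sigma> E)"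
proof -
  obtain x0 where x0: "x0 \<in> \<Sigma>" using assms(2) by blast
  note bor = assms(3)
  show ?thesis unfolding is_SM_tree_def
  proof (intro conjI)
    show "is_S_tree (words \<Sigma>) prefix \<Sigma> (word_S \<Sigma>)" using S_tree_words[OF assms(1)] .
    show "\<forall>F\<in>M_E \<Sigma> E. shape_preserving (words \<Sigma>) prefix (word_S \<Sigma>) F" unfolding M_E_def by blast
    show "\<exists>G\<in>M_E \<Sigma> E. \<forall>a\<in>words \<Sigma>. G a = a" using id_M[OF x0] by (intro bexI[of _ "\<lambda>a. a"]) auto
    show "\<forall>F\<in>M_E \<Sigma> E. \<forall>G\<in>M_E \<Sigma> E. \<exists>H\<in>M_E \<Sigma> E. \<forall>a\<in>words \<Sigma>. H a = F (G a)"
    proof (intro ballI)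
      fix F G assume "F \<in> M_E \<Sigma> E" "G \<in> M_E \<Sigma> E"
      then have "(\<lambda>a. F (G a)) \<in> M_E \<Sigma> E" by (rule comp_M[OF bor x0])
      then show "\<exists>H\<in>M_E \<Sigma> E. \<forall>a\<in>words \<Sigma>. H a = F (G a)" by (intro bexI[of _ "\<lambda>a. F (G a)"]) auto
    qed
    show "\<forall>Fs. (\<forall>i. Fs i \<in> M_E \<Sigma> E) \<and> (\<forall>i. \<forall>a\<in>words \<Sigma>. level (words \<Sigma>) prefix a \<le> i \<longrightarrow> Fs i a = Fs (Suc i) a) \<longrightarrow>
        (\<exists>G\<in>M_E \<Sigma> E. \<forall>i. \<forall>a\<in>words \<Sigma>. level (words \<Sigma>) prefix a \<le> i \<longrightarrow> G a = Fs i a)"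
    proof (intro allI impI)
      fix Fs :: "nat \<Rightarrow> 'c list \<Rightarrow> 'c list"
      assume h: "(\<forall>i. Fs i \<in> M_E \<Sigma> E) \<and> (\<forall>i. \<forall>a\<in>words \<Sigma>. level (words \<Sigma>) prefix a \<le> i \<longrightarrow> Fs i a = Fs (Suc i) a)"
      then have h1: "\<forall>i. Fs i \<in> M_E \<Sigma> E" by blast
      have h2: "\<forall>i. \<forall>a\<in>words \<Sigma>. length a \<le> i \<longrightarrow> Fs i a = Fs (Suc i) a"
      proof (intro allI ballI impI)
        fix i a assume a: "a \<in> words \<Sigma>" "length a \<le> i"
        then have "level (words \<Sigma>) prefix a \<le> i" by simp
        then show "Fs i a = Fs (Suc i) a" using h a(1) by blast
      qed
      have "(\<lambda>a. Fs (length a) a) \<in> M_E \<Sigma> E \<and> (\<forall>i. \<forall>a\<in>words \<Sigma>. length a \<le> i \<longrightarrow> Fs (length a) a = Fs i a)"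
        using lim_M[OF h1 h2] .
      then have GM: "(\<lambda>a. Fs (length a) a) \<in> M_E \<Sigma> E"
        and Gi: "\<forall>i. \<forall>a\<in>words \<Sigma>. length a \<le> i \<longrightarrow> Fs (length a) a = Fs i a" by blast+
      show "\<exists>G\<in>M_E \<Sigma> E. \<forall>i. \<forall>a\<in>words \<Sigma>. level (words \<Sigma>) prefix a \<le> i \<longrightarrow> G a = Fs i a"
      proof (intro bexI[OF _ GM] allI ballI impI)
        fix i a assume a: "a \<in> words \<Sigma>" "level (words \<Sigma>) prefix a \<le> i"
        then have "length a \<le> i" by simp
        then show "Fs (length a) a = Fs i a" using Gi a(1) by blast
      qed
    qed
    show "\<forall>n. \<forall>F\<in>M_E \<Sigma> E. 0 < tilde (words \<Sigma>) prefix F n \<and> skips (words \<Sigma>) prefix F (tilde (words \<Sigma>) prefix F n - 1) \<longrightarrow>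
        (\<exists>F1\<in>M_E \<Sigma> E. \<exists>F2\<in>M_E \<Sigma> E. skips_only (words \<Sigma>) prefix F2 (tilde (words \<Sigma>) prefix F n - 1) \<and>
           (\<forall>a\<in>words \<Sigma>. level (words \<Sigma>) prefix a \<le> n \<longrightarrow> F2 (F1 a) = F a))"
      using M2_lemma[OF bor x0] by blast
    show "\<forall>n m. n < m \<longrightarrow> (\<exists>F\<in>M_E \<Sigma> E. skips_only (words \<Sigma>) prefix F m \<and>
           (\<forall>a b p c x. a \<in> words \<Sigma> \<and> level (words \<Sigma>) prefix a = n \<and> b \<in> words \<Sigma> \<and> level (words \<Sigma>) prefix b = m \<and>
              word_S \<Sigma> a p c = Some x \<and> prefix x b \<longrightarrow> word_S \<Sigma> b p c = Some (F b)))"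
    proof (intro allI impI)
      fix n m :: nat assume "n < m"
      then show "\<exists>F\<in>M_E \<Sigma> E. skips_only (words \<Sigma>) prefix F m \<and>
           (\<forall>a b p c x. a \<in> words \<Sigma> \<and> level (words \<Sigma>) prefix a = n \<and> b \<in> words \<Sigma> \<and> level (words \<Sigma>) prefix b = m \<and>
              word_S \<Sigma> a p c = Some x \<and> prefix x b \<longrightarrow> word_S \<Sigma> b p c = Some (F b))"
        using M3_lemma[OF bor x0] by blast
    qed
  qed
qed

end
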